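(* Let $\mathbb{E}$ be a finitely complete category, $\Sigma$ a fibrational class of split epimorphisms, and suppose $\mathbb{E}$ is a $\Sigma$-Mal'tsev category. If a monomorphism $m\colon U\rightarrowtail X$ is normal to a $\Sigma$-equivalence relation $S$ on $X$, then the object $U$ is $\Sigma$-special. If moreover $\mathbb{E}$ is $\Sigma$-protomodular, then a monomorphism $m$ is normal to at most one $\Sigma$-equivalence relation.
   Context: A split epimorphism is a pair $(f,s)$ with $fs=1$. A class $\Sigma$ of split epimorphisms is fibrational if it contains all split epimorphisms $(f,s)$ with $f$ invertible and is stable under pullback along any morphism. A pair of morphisms with common codomain $Z$ is jointly extremally epic if it factors jointly through no non-invertible monomorphism into $Z$. $\mathbb{E}$ is $\Sigma$-Mal'tsev if for every split epimorphism $(f,s)\colon X\rightleftarrows Y$ in $\Sigma$ and every split epimorphism $(g,t)$ with $g\colon Y'\to Y$, letting $X'=Y'\times_YX$, $s'=(1_{Y'},sg)$, $\bar t=(tf,1_X)$, the pair $(s',\bar t)$ is jointly extremally epic. A $\Sigma$-relation is a reflexive relation $(d_0,d_1)\colon S\rightarrowtail X\times X$ with reflexivity $s_0$ such that $(d_0,s_0)\in\Sigma$; a $\Sigma$-equivalence relation is an equivalence relation which is a $\Sigma$-relation. An object $U$ is $\Sigma$-special when the kernel relation of $U\to 1$, namely $U\times U$ with its projections and the diagonal, is a $\Sigma$-relation. A monomorphism $m\colon U\rightarrowtail X$ is normal to an equivalence relation $S$ on $X$ when $m^{-1}(S)=U\times U$ (the indiscrete relation) and both commutative squares $d_i^S\circ\tilde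 m=m\circ p_i$ ($i=0,1$), where $\tilde m\colon U\times U\to S$ is the induced morphism, are pullbacks. A split epimorphism $(f,s)\colon X\rightleftarrows Y$ is strongly split when for every morphism $y\colon\bar Y\to Y$, with $x\colon\bar Y\times_YX\to X$ the pullback projection, the pair $(x,s)$ is jointly extremally epic; $\mathbb{E}$ is $\Sigma$-protomodular when every split epimorphism in $\Sigma$ is strongly split. *)

theory Defs
  imports Main
begin

text \<open>A category whose objects are all elements of type 'o and arrows all elements of 'a.
  cmp g f is the composite g after f (meaningful when cod f = dom g).\<close>
record ('o,'a) cat =
  cdom :: "'a \<Rightarrow> 'o"
  ccod :: "'a \<Rightarrow> 'o"
  idm  :: "'o \<Rightarrow> 'a"
  cmp  :: "'a \<Rightarrow> 'a \<Rightarrow> 'a"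

definition is_category :: "('o,'a) cat \<Rightarrow> bool" where
  "is_category C \<longleftrightarrow>
     (\<forall>A. cdom C (idm C A) = A \<and> ccod C (idm C A) = A) \<and>
     (\<forall>f g. ccod C f = cdom C g \<longrightarrow>
        cdom C (cmp C g f) = cdom C f \<and> ccod C (cmp C g f) = ccod C g) \<and>
     (\<forall>f. cmp C f (idm C (cdom C f)) = f \<and> cmp C (idm C (ccod C f)) f = f) \<and>
     (\<forall>f g h. ccod C f = cdom C g \<and> ccod C g = cdom C h \<longrightarrow>
        cmp C h (cmp C g f) = cmp C (cmp C h g) f)"

definition hom :: "('o,'a) cat \<Rightarrow> 'a \<Rightarrow> 'o \<Rightarrow> 'o \<Rightarrow> bool" where
  "hom C f A B \<longleftrightarrow> cdom C f = A \<and> ccod C f = B"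

definition mono :: "('o,'a) cat \<Rightarrow> 'a \<Rightarrow> bool" where
  "mono C m \<longleftrightarrow> (\<forall>g h. ccod C g = cdom C m \<and> ccod C h = cdom C m \<and> cdom C g = cdom C h
      \<and> cmp C m g = cmp C m h \<longrightarrow> g = h)"

definition iso :: "('o,'a) cat \<Rightarrow> 'a \<Rightarrow> bool" where
  "iso C f \<longleftrightarrow> (\<exists>g. hom C g (ccod C f) (cdom C f) \<and>
      cmp C g f = idm C (cdom C f) \<and> cmp C f g = idm C (ccod C f))"

definition is_pullback :: "('o,'a) cat \<Rightarrow> 'a \<Rightarrow> 'a \<Rightarrow> 'a \<Rightarrow> 'a \<Rightarrow> bool" where
  "is_pullback C f g a b \<longleftrightarrow>
     ccod C f = ccod C g \<and> ccod C a = cdom C f \<and> ccod C b = cdom C g \<and>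
     cdom C a = cdom C b \<and> cmp C f a = cmp C g b \<and>
     (\<forall>x y. ccod C x = cdom C f \<and> ccod C y = cdom C g \<and> cdom C x = cdom C y \<and>
            cmp C f x = cmp C g y \<longrightarrow>
        (\<exists>!u. hom C u (cdom C x) (cdom C a) \<and> cmp C a u = x \<and> cmp C b u = y))"

definition is_product :: "('o,'a) cat \<Rightarrow> 'a \<Rightarrow> 'a \<Rightarrow> bool" where
  "is_product C p0 p1 \<longleftrightarrow> cdom C p0 = cdom C p1 \<and>
     (\<forall>x y. cdom C x = cdom C y \<and> ccod C x = ccod C p0 \<and> ccod C y = ccod C p1 \<longrightarrow>
        (\<exists>!u. hom C u (cdom C x) (cdom C p0) \<and> cmp C p0 u = x \<and> cmp C p1 u = y))"

definition terminal :: "('o,'a) cat \<Rightarrow> 'o \<Rightarrow> bool" where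
  "terminal C T \<longleftrightarrow> (\<forall>A. \<exists>!f. hom C f A T)"

definition finitely_complete :: "('o,'a) cat \<Rightarrow> bool" where
  "finitely_complete C \<longleftrightarrow> (\<exists>T. terminal C T) \<and>
     (\<forall>f g. ccod C f = ccod C g \<longrightarrow> (\<exists>a b. is_pullback C f g a b))"

definition split_epi :: "('o,'a) cat \<Rightarrow> 'a \<Rightarrow> 'a \<Rightarrow> bool" where
  "split_epi C f s \<longleftrightarrow> hom C s (ccod C f) (cdom C f) \<and> cmp C f s = idm C (ccod C f)"

definition class_of_split_epis :: "('o,'a) cat \<Rightarrow> ('a \<times> 'a) set \<Rightarrow> bool" where
  "class_of_split_epis C \<Sigma> \<longleftrightarrow> (\<forall>(f,s)\<in>\<Sigma>. split_epi C f s)"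

definition fibrational :: "('o,'a) cat \<Rightarrow> ('a \<times> 'a) set \<Rightarrow> bool" where
  "fibrational C \<Sigma> \<longleftrightarrow>
     (\<forall>f s. split_epi C f s \<and> iso C f \<longrightarrow> (f,s) \<in> \<Sigma>) \<and>
     (\<forall>f s g q p s'. (f,s) \<in> \<Sigma> \<and> ccod C g = ccod C f \<and> is_pullback C f g q p \<and>
        hom C s' (cdom C g) (cdom C p) \<and> cmp C p s' = idm C (cdom C g) \<and>
        cmp C q s' = cmp C s g \<longrightarrow> (p, s') \<in> \<Sigma>)"

definition jointly_extremally_epic :: "('o,'a) cat \<Rightarrow> 'a \<Rightarrow> 'a \<Rightarrow> bool" where
  "jointly_extremally_epic C a b \<longleftrightarrow> ccod C a = ccod C b \<and>
     (\<forall>m a' b'. mono C m \<and> ccod C m = ccod C a \<and>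
        hom C a' (cdom C a) (cdom C m) \<and> hom C b' (cdom C b) (cdom C m) \<and>
        cmp C m a' = a \<and> cmp C m b' = b \<longrightarrow> iso C m)"

definition sigma_maltsev :: "('o,'a) cat \<Rightarrow> ('a \<times> 'a) set \<Rightarrow> bool" where
  "sigma_maltsev C \<Sigma> \<longleftrightarrow>
     (\<forall>f s g t q p s' tb. (f,s) \<in> \<Sigma> \<and> split_epi C g t \<and> ccod C g = ccod C f \<and>
        is_pullback C f g q p \<and>
        hom C s' (cdom C g) (cdom C p) \<and> cmp C p s' = idm C (cdom C g) \<and>
        cmp C q s' = cmp C s g \<and>
        hom C tb (cdom C f) (cdom C p) \<and> cmp C p tb = cmp C t f \<and>
        cmp C q tb = idm C (cdom C f)
        \<longrightarrow> jointly_extremally_epic C s' tb)"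

text \<open>A relation (d0,d1) : S \<rightarrowtail> X \<times> X is represented by a jointly monic span.\<close>
definition reflexive_relation :: "('o,'a) cat \<Rightarrow> 'o \<Rightarrow> 'a \<Rightarrow> 'a \<Rightarrow> 'a \<Rightarrow> bool" where
  "reflexive_relation C X d0 d1 s0 \<longleftrightarrow>
     cdom C d0 = cdom C d1 \<and> ccod C d0 = X \<and> ccod C d1 = X \<and>
     (\<forall>g h. ccod C g = cdom C d0 \<and> ccod C h = cdom C d0 \<and> cdom C g = cdom C h \<and>
        cmp C d0 g = cmp C d0 h \<and> cmp C d1 g = cmp C d1 h \<longrightarrow> g = h) \<and>
     hom C s0 X (cdom C d0) \<and> cmp C d0 s0 = idm C X \<and> cmp C d1 s0 = idm C X"

definition equivalence_relation :: "('o,'a) cat \<Rightarrow> 'o \<Rightarrow> 'a \<Rightarrow> 'a \<Rightarrow> 'a \<Rightarrow> bool" where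
  "equivalence_relation C X d0 d1 s0 \<longleftrightarrow>
     reflexive_relation C X d0 d1 s0 \<and>
     (\<exists>\<sigma>. hom C \<sigma> (cdom C d0) (cdom C d0) \<and> cmp C d0 \<sigma> = d1 \<and> cmp C d1 \<sigma> = d0) \<and>
     (\<forall>a b. is_pullback C d1 d0 a b \<longrightarrow>
        (\<exists>\<tau>. hom C \<tau> (cdom C a) (cdom C d0) \<and> cmp C d0 \<tau> = cmp C d0 a \<and>
             cmp C d1 \<tau> = cmp C d1 b))"

definition sigma_relation :: "('o,'a) cat \<Rightarrow> ('a \<times> 'a) set \<Rightarrow> 'o \<Rightarrow> 'a \<Rightarrow> 'a \<Rightarrow> 'a \<Rightarrow> bool" where
  "sigma_relation C \<Sigma> X d0 d1 s0 \<longleftrightarrow> reflexive_relation C X d0 d1 s0 \<and> (d0, s0) \<in> \<Sigma>"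

definition sigma_equivalence_relation ::
  "('o,'a) cat \<Rightarrow> ('a \<times> 'a) set \<Rightarrow> 'o \<Rightarrow> 'a \<Rightarrow> 'a \<Rightarrow> 'a \<Rightarrow> bool" where
  "sigma_equivalence_relation C \<Sigma> X d0 d1 s0 \<longleftrightarrow>
     equivalence_relation C X d0 d1 s0 \<and> sigma_relation C \<Sigma> X d0 d1 s0"

text \<open>U is \<Sigma>-special: the kernel relation of U \<rightarrow> 1, i.e. U \<times> U with its projections
  and the diagonal, is a \<Sigma>-relation (for a/any choice of the product).\<close>
definition sigma_special :: "('o,'a) cat \<Rightarrow> ('a \<times> 'a) set \<Rightarrow> 'o \<Rightarrow> bool" where
  "sigma_special C \<Sigma> U \<longleftrightarrow>
     (\<forall>p0 p1 \<delta>. is_product C p0 p1 \<and> ccod C p0 = U \<and> ccod C p1 = U \<and>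
        hom C \<delta> U (cdom C p0) \<and> cmp C p0 \<delta> = idm C U \<and> cmp C p1 \<delta> = idm C U
        \<longrightarrow> sigma_relation C \<Sigma> U p0 p1 \<delta>)"

text \<open>m : U \<rightarrowtail> X normal to the relation (d0,d1) on X: the inverse image of S along
  m \<times> m is all of U \<times> U (i.e. there is mt : U \<times> U \<rightarrow> S with d_i mt = m p_i) and both
  squares d_i \<circ> mt = m \<circ> p_i are pullbacks.\<close>
definition normal_to :: "('o,'a) cat \<Rightarrow> 'a \<Rightarrow> 'a \<Rightarrow> 'a \<Rightarrow> bool" where
  "normal_to C m d0 d1 \<longleftrightarrow> mono C m \<and> ccod C m = ccod C d0 \<and>
     (\<exists>p0 p1 mt. is_product C p0 p1 \<and> ccod C p0 = cdom C m \<and> ccod C p1 = cdom C m \<and>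
        hom C mt (cdom C p0) (cdom C d0) \<and>
        cmp C d0 mt = cmp C m p0 \<and> cmp C d1 mt = cmp C m p1 \<and>
        is_pullback C d0 m mt p0 \<and> is_pullback C d1 m mt p1)"

definition strongly_split :: "('o,'a) cat \<Rightarrow> 'a \<Rightarrow> 'a \<Rightarrow> bool" where
  "strongly_split C f s \<longleftrightarrow>
     (\<forall>y x x'. ccod C y = ccod C f \<and> is_pullback C f y x x' \<longrightarrow>
        jointly_extremally_epic C x s)"

definition sigma_protomodular :: "('o,'a) cat \<Rightarrow> ('a \<times> 'a) set \<Rightarrow> bool" where
  "sigma_protomodular C \<Sigma> \<longleftrightarrow> (\<forall>(f,s)\<in>\<Sigma>. strongly_split C f s)"

end

theory Submission
  imports Defs
begin

locale ecat = fixes C :: "('o,'a) cat" assumes cat: "is_category C"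
begin

lemma dom_id[simp]: "cdom C (idm C A) = A" and cod_id[simp]: "ccod C (idm C A) = A"
  using cat unfolding is_category_def by auto

lemma dom_comp[simp]: "ccod C f = cdom C g \<Longrightarrow> cdom C (cmp C g f) = cdom C f"
  and cod_comp[simp]: "ccod C f = cdom C g \<Longrightarrow> ccod C (cmp C g f) = ccod C g"
  using cat unfolding is_category_def by auto

lemma id_r[simp]: "cmp C f (idm C (cdom C f)) = f" and id_l[simp]: "cmp C (idm C (ccod C f)) f = f"
  using cat unfolding is_category_def by auto

lemma id_r'[simp]: "cdom C f = A \<Longrightarrow> cmp C f (idm C A) = f" and id_l'[simp]: "ccod C f = A \<Longrightarrow> cmp C (idm C A) f = f"
  by auto

lemma assoc: "ccod C f = cdom C g \<Longrightarrow> ccod C g = cdom C h \<Longrightarrow>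
    cmp C h (cmp C g f) = cmp C (cmp C h g) f"
  using cat unfolding is_category_def by auto

lemma prod_med:
  assumes "is_product C p0 p1" "cdom C x = cdom C y" "ccod C x = ccod C p0" "ccod C y = ccod C p1"
  shows "\<exists>u. hom C u (cdom C x) (cdom C p0) \<and> cmp C p0 u = x \<and> cmp C p1 u = y"
  using assms unfolding is_product_def by metis

lemma prod_uniq:
  assumes "is_product C p0 p1" "hom C u W (cdom C p0)" "hom C v W (cdom C p0)"
    "cmp C p0 u = cmp C p0 v" "cmp C p1 u = cmp C p1 v"
  shows "u = v"
proof -
  have d: "cdom C p0 = cdom C p1" using assms(1) unfolding is_product_def by auto
  let ?x = "cmp C p0 u" and ?y = "cmp C p1 u"
  have "cdom C ?x = cdom C ?y \<and> ccod C ?x = ccod C p0 \<and> ccod C ?y = ccod C p1"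
    using assms(2) d by (simp add: hom_def)
  then have "\<exists>!w. hom C w (cdom C ?x) (cdom C p0) \<and> cmp C p0 w = ?x \<and> cmp C p1 w = ?y"
    using assms(1) unfolding is_product_def by blast
  moreover have "cdom C ?x = W" using assms(2) by (simp add: hom_def)
  ultimately show ?thesis using assms by auto
qed

lemma prod_iso:
  assumes "is_product C p0 p1" "is_product C q0 q1" "ccod C p0 = ccod C q0" "ccod C p1 = ccod C q1"
  shows "\<exists>\<psi> \<psi>'. hom C \<psi> (cdom C q0) (cdom C p0) \<and> cmp C p0 \<psi> = q0 \<and> cmp C p1 \<psi> = q1 \<and>
     hom C \<psi>' (cdom C p0) (cdom C q0) \<and> cmp C q0 \<psi>' = p0 \<and> cmp C q1 \<psi>' = p1 \<and>
     cmp C \<psi> \<psi>' = idm C (cdom C p0) \<and> cmp C \<psi>' \<psi> = idm C (cdom C q0)"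
proof -
  have dp: "cdom C p0 = cdom C p1" and dq: "cdom C q0 = cdom C q1"
    using assms unfolding is_product_def by auto
  obtain \<psi> where \<psi>: "hom C \<psi> (cdom C q0) (cdom C p0)" "cmp C p0 \<psi> = q0" "cmp C p1 \<psi> = q1"
    using prod_med[OF assms(1), of q0 q1] dq assms by auto
  obtain \<psi>' where \<psi>': "hom C \<psi>' (cdom C p0) (cdom C q0)" "cmp C q0 \<psi>' = p0" "cmp C q1 \<psi>' = p1"
    using prod_med[OF assms(2), of p0 p1] dp assms by auto
  have h1: "hom C (cmp C \<psi> \<psi>') (cdom C p0) (cdom C p0)" using \<psi> \<psi>' by (auto simp: hom_def)
  have e1: "cmp C \<psi> \<psi>' = idm C (cdom C p0)"
  proof (rule prod_uniq[OF assms(1) h1])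
    show "hom C (idm C (cdom C p0)) (cdom C p0) (cdom C p0)" by (simp add: hom_def)
    show "cmp C p0 (cmp C \<psi> \<psi>') = cmp C p0 (idm C (cdom C p0))"
      using \<psi> \<psi>' by (simp add: hom_def assoc)
    show "cmp C p1 (cmp C \<psi> \<psi>') = cmp C p1 (idm C (cdom C p0))"
      using \<psi> \<psi>' dp by (simp add: hom_def assoc)
  qed
  have h2: "hom C (cmp C \<psi>' \<psi>) (cdom C q0) (cdom C q0)" using \<psi> \<psi>' by (auto simp: hom_def)
  have e2: "cmp C \<psi>' \<psi> = idm C (cdom C q0)"
  proof (rule prod_uniq[OF assms(2) h2])
    show "hom C (idm C (cdom C q0)) (cdom C q0) (cdom C q0)" by (simp add: hom_def)
    show "cmp C q0 (cmp C \<psi>' \<psi>) = cmp C q0 (idm C (cdom C q0))"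
      using \<psi> \<psi>' by (simp add: hom_def assoc)
    show "cmp C q1 (cmp C \<psi>' \<psi>) = cmp C q1 (idm C (cdom C q0))"
      using \<psi> \<psi>' dq by (simp add: hom_def assoc)
  qed
  show ?thesis using \<psi> \<psi>' e1 e2 by blast
qed

lemma pb_iso:
  assumes pb: "is_pullback C f g a b" and \<phi>: "hom C \<phi> P' (cdom C a)" and \<phi>': "hom C \<phi>' (cdom C a) P'"
    and e1: "cmp C \<phi> \<phi>' = idm C (cdom C a)" and e2: "cmp C \<phi>' \<phi> = idm C P'"
  shows "is_pullback C f g (cmp C a \<phi>) (cmp C b \<phi>)"
proof -
  have B: "ccod C f = ccod C g" "ccod C a = cdom C f" "ccod C b = cdom C g"
     "cdom C a = cdom C b" "cmp C f a = cmp C g b"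
    using pb unfolding is_pullback_def by auto
  have U: "\<And>x y. ccod C x = cdom C f \<Longrightarrow> ccod C y = cdom C g \<Longrightarrow> cdom C x = cdom C y \<Longrightarrow>
            cmp C f x = cmp C g y \<Longrightarrow>
        (\<exists>!u. hom C u (cdom C x) (cdom C a) \<and> cmp C a u = x \<and> cmp C b u = y)"
    using pb unfolding is_pullback_def by blast
  have sq: "cmp C f (cmp C a \<phi>) = cmp C g (cmp C b \<phi>)"
    using B \<phi> by (simp add: hom_def assoc)
  show ?thesis unfolding is_pullback_def
  proof (intro conjI allI impI)
    show "ccod C f = ccod C g" using B by simp
    show "ccod C (cmp C a \<phi>) = cdom C f" using B \<phi> by (simp add: hom_def)
    show "ccod C (cmp C b \<phi>) = cdom C g" using B \<phi> by (simp add: hom_def)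
    show "cdom C (cmp C a \<phi>) = cdom C (cmp C b \<phi>)" using B \<phi> by (simp add: hom_def)
    show "cmp C f (cmp C a \<phi>) = cmp C g (cmp C b \<phi>)" by (rule sq)
    fix x y assume H: "ccod C x = cdom C f \<and> ccod C y = cdom C g \<and> cdom C x = cdom C y \<and>
            cmp C f x = cmp C g y"
    then obtain v where v: "hom C v (cdom C x) (cdom C a)" "cmp C a v = x" "cmp C b v = y"
      using U by blast
    have vu: "\<And>w. hom C w (cdom C x) (cdom C a) \<Longrightarrow> cmp C a w = x \<Longrightarrow> cmp C b w = y \<Longrightarrow> w = v"
      using U H v by blast
    have dom_ab: "cdom C (cmp C a \<phi>) = P'" using B \<phi> by (simp add: hom_def)
    show "\<exists>!u. hom C u (cdom C x) (cdom C (cmp C a \<phi>)) \<and> cmp C (cmp C a \<phi>) u = x \<and> cmp C (cmp C b \<phi>) u = y"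
    proof (rule ex1I[where a="cmp C \<phi>' v"])
      have "cmp C (cmp C a \<phi>) (cmp C \<phi>' v) = cmp C a (cmp C (cmp C \<phi> \<phi>') v)"
        using \<phi> \<phi>' v B by (simp add: hom_def assoc)
      also have "\<dots> = x" using e1 v by (simp add: hom_def)
      finally have 1: "cmp C (cmp C a \<phi>) (cmp C \<phi>' v) = x" .
      have "cmp C (cmp C b \<phi>) (cmp C \<phi>' v) = cmp C b (cmp C (cmp C \<phi> \<phi>') v)"
        using \<phi> \<phi>' v B by (simp add: hom_def assoc)
      also have "\<dots> = y" using e1 v B by (simp add: hom_def)
      finally have 2: "cmp C (cmp C b \<phi>) (cmp C \<phi>' v) = y" .
      show "hom C (cmp C \<phi>' v) (cdom C x) (cdom C (cmp C a \<phi>)) \<and>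
        cmp C (cmp C a \<phi>) (cmp C \<phi>' v) = x \<and> cmp C (cmp C b \<phi>) (cmp C \<phi>' v) = y"
        using 1 2 dom_ab \<phi>' v by (simp add: hom_def)
    next
      fix w assume W: "hom C w (cdom C x) (cdom C (cmp C a \<phi>)) \<and> cmp C (cmp C a \<phi>) w = x \<and> cmp C (cmp C b \<phi>) w = y"
      have "hom C (cmp C \<phi> w) (cdom C x) (cdom C a)" using W \<phi> dom_ab by (simp add: hom_def)
      moreover have "cmp C a (cmp C \<phi> w) = x" using W \<phi> dom_ab B by (simp add: hom_def assoc)
      moreover have "cmp C b (cmp C \<phi> w) = y" using W \<phi> dom_ab B by (simp add: hom_def assoc)
      ultimately have "cmp C \<phi> w = v" using vu by blast
      then have "cmp C \<phi>' (cmp C \<phi> w) = cmp C \<phi>' v" by simp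
      moreover have "cmp C \<phi>' (cmp C \<phi> w) = w" using W \<phi> \<phi>' e2 dom_ab
        by (simp add: hom_def assoc)
      ultimately show "w = cmp C \<phi>' v" by simp
    qed
  qed
qed

lemma term_prod:
  assumes "finitely_complete C"
  shows "\<exists>\<pi>0 \<pi>1. is_product C \<pi>0 \<pi>1 \<and> ccod C \<pi>0 = X \<and> ccod C \<pi>1 = X"
proof -
  obtain T where T: "terminal C T" using assms unfolding finitely_complete_def by blast
  have tu: "\<And>A f g. hom C f A T \<Longrightarrow> hom C g A T \<Longrightarrow> f = g" using T unfolding terminal_def by metis
  obtain t where t: "hom C t X T" using T unfolding terminal_def by metis
  obtain a b where pb: "is_pullback C t t a b"
    using assms t unfolding finitely_complete_def hom_def by metis
  have B: "ccod C a = X" "ccod C b = X" "cdom C a = cdom C b" using pb t unfolding is_pullback_def hom_def by auto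
  show ?thesis
  proof (intro exI conjI)
    show "ccod C a = X" "ccod C b = X" by (fact B)+
    show "is_product C a b" unfolding is_product_def
    proof (intro conjI allI impI)
      show "cdom C a = cdom C b" by (fact B)
      fix x y assume H: "cdom C x = cdom C y \<and> ccod C x = ccod C a \<and> ccod C y = ccod C b"
      have "cmp C t x = cmp C t y"
        by (rule tu[of _ "cdom C x"]) (use H t B in \<open>auto simp: hom_def\<close>)
      then show "\<exists>!u. hom C u (cdom C x) (cdom C a) \<and> cmp C a u = x \<and> cmp C b u = y"
        using pb H t B unfolding is_pullback_def hom_def by auto
    qed
  qed
qed

lemma intersection:
  assumes fc: "finitely_complete C" and rS: "reflexive_relation C X d0 d1 s0"
    and rT: "reflexive_relation C X e0 e1 r0"
  shows "\<exists>a b. mono C a \<and> ccod C a = cdom C d0 \<and> hom C b (cdom C a) (cdom C e0) \<and>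
     cmp C d0 a = cmp C e0 b \<and> cmp C d1 a = cmp C e1 b \<and>
     (\<forall>z w. ccod C z = cdom C d0 \<and> ccod C w = cdom C e0 \<and> cdom C z = cdom C w \<and>
        cmp C d0 z = cmp C e0 w \<and> cmp C d1 z = cmp C e1 w \<longrightarrow>
        (\<exists>u. hom C u (cdom C z) (cdom C a) \<and> cmp C a u = z))"
proof -
  have S: "cdom C d0 = cdom C d1" "ccod C d0 = X" "ccod C d1 = X"
    using rS unfolding reflexive_relation_def by auto
  have T: "cdom C e0 = cdom C e1" "ccod C e0 = X" "ccod C e1 = X"
    using rT unfolding reflexive_relation_def by auto
  have Tm: "\<And>g h. ccod C g = cdom C e0 \<Longrightarrow> ccod C h = cdom C e0 \<Longrightarrow> cdom C g = cdom C h \<Longrightarrow>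
        cmp C e0 g = cmp C e0 h \<Longrightarrow> cmp C e1 g = cmp C e1 h \<Longrightarrow> g = h"
    using rT unfolding reflexive_relation_def by blast
  obtain \<pi>0 \<pi>1 where \<pi>: "is_product C \<pi>0 \<pi>1" "ccod C \<pi>0 = X" "ccod C \<pi>1 = X"
    using term_prod[OF fc] by blast
  have d\<pi>: "cdom C \<pi>0 = cdom C \<pi>1" using \<pi> unfolding is_product_def by auto
  obtain k where k: "hom C k (cdom C d0) (cdom C \<pi>0)" "cmp C \<pi>0 k = d0" "cmp C \<pi>1 k = d1"
    using prod_med[OF \<pi>(1), of d0 d1] S \<pi> by auto
  obtain l where l: "hom C l (cdom C e0) (cdom C \<pi>0)" "cmp C \<pi>0 l = e0" "cmp C \<pi>1 l = e1"
    using prod_med[OF \<pi>(1), of e0 e1] T \<pi> by auto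
  obtain a b where pb: "is_pullback C k l a b"
    using fc k l unfolding finitely_complete_def hom_def by metis
  have B: "ccod C a = cdom C d0" "ccod C b = cdom C e0" "cdom C a = cdom C b" "cmp C k a = cmp C l b"
    using pb k l unfolding is_pullback_def hom_def by auto
  have U: "\<And>x y. ccod C x = cdom C k \<Longrightarrow> ccod C y = cdom C l \<Longrightarrow> cdom C x = cdom C y \<Longrightarrow>
            cmp C k x = cmp C l y \<Longrightarrow>
        (\<exists>!u. hom C u (cdom C x) (cdom C a) \<and> cmp C a u = x \<and> cmp C b u = y)"
    using pb unfolding is_pullback_def by blast
  have e0: "cmp C d0 a = cmp C e0 b"
  proof -
    have "cmp C d0 a = cmp C \<pi>0 (cmp C k a)" using k B(1) by (simp add: hom_def assoc)
    also have "\<dots> = cmp C \<pi>0 (cmp C l b)" using B by simp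
    also have "\<dots> = cmp C e0 b" using l B by (simp add: hom_def assoc)
    finally show ?thesis .
  qed
  have e1: "cmp C d1 a = cmp C e1 b"
  proof -
    have "cmp C d1 a = cmp C \<pi>1 (cmp C k a)" using k B(1) d\<pi> by (simp add: hom_def assoc)
    also have "\<dots> = cmp C \<pi>1 (cmp C l b)" using B by simp
    also have "\<dots> = cmp C e1 b" using l B d\<pi> by (simp add: hom_def assoc)
    finally show ?thesis .
  qed
  have mono: "mono C a" unfolding mono_def
  proof (intro allI impI)
    fix g h assume H: "ccod C g = cdom C a \<and> ccod C h = cdom C a \<and> cdom C g = cdom C h \<and> cmp C a g = cmp C a h"
    have Hg: "ccod C g = cdom C a" using H by simp
    have bgh: "cmp C b g = cmp C b h"
    proof (rule Tm)
      show "ccod C (cmp C b g) = cdom C e0" "ccod C (cmp C b h) = cdom C e0"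
        "cdom C (cmp C b g) = cdom C (cmp C b h)" using H B by auto
      have ra: "\<And>x. ccod C x = cdom C a \<Longrightarrow> cmp C e0 (cmp C b x) = cmp C d0 (cmp C a x)"
      proof -
        fix x assume x: "ccod C x = cdom C a"
        have "cmp C e0 (cmp C b x) = cmp C (cmp C e0 b) x" using x B T by (simp add: assoc)
        also have "\<dots> = cmp C (cmp C d0 a) x" using e0 by simp
        also have "\<dots> = cmp C d0 (cmp C a x)" using x B S by (simp add: assoc)
        finally show "cmp C e0 (cmp C b x) = cmp C d0 (cmp C a x)" .
      qed
      have rb: "\<And>x. ccod C x = cdom C a \<Longrightarrow> cmp C e1 (cmp C b x) = cmp C d1 (cmp C a x)"
      proof -
        fix x assume x: "ccod C x = cdom C a"
        have "cmp C e1 (cmp C b x) = cmp C (cmp C e1 b) x" using x B T by (simp add: assoc)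
        also have "\<dots> = cmp C (cmp C d1 a) x" using e1 by simp
        also have "\<dots> = cmp C d1 (cmp C a x)" using x B S by (simp add: assoc)
        finally show "cmp C e1 (cmp C b x) = cmp C d1 (cmp C a x)" .
      qed
      show "cmp C e0 (cmp C b g) = cmp C e0 (cmp C b h)" using ra[of g] ra[of h] H by simp
      show "cmp C e1 (cmp C b g) = cmp C e1 (cmp C b h)" using rb[of g] rb[of h] H by simp
    qed
    have "\<exists>!u. hom C u (cdom C (cmp C a g)) (cdom C a) \<and> cmp C a u = cmp C a g \<and> cmp C b u = cmp C b g"
    proof (rule U)
      show "ccod C (cmp C a g) = cdom C k" "ccod C (cmp C b g) = cdom C l"
        "cdom C (cmp C a g) = cdom C (cmp C b g)" using H B k l by (auto simp: hom_def)
      have "cmp C k (cmp C a g) = cmp C (cmp C k a) g" using Hg B(1-3) k by (simp add: hom_def assoc)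
      also have "\<dots> = cmp C (cmp C l b) g" using B(4) by simp
      also have "\<dots> = cmp C l (cmp C b g)" using Hg B(1-3) l by (simp add: hom_def assoc)
      finally show "cmp C k (cmp C a g) = cmp C l (cmp C b g)" .
    qed
    then show "g = h" using H B bgh by (auto simp: hom_def)
  qed
  show ?thesis
  proof (intro exI conjI)
    show "mono C a" by (fact mono)
    show "ccod C a = cdom C d0" by (fact B)
    show "hom C b (cdom C a) (cdom C e0)" using B by (simp add: hom_def)
    show "cmp C d0 a = cmp C e0 b" "cmp C d1 a = cmp C e1 b" by (fact e0, fact e1)
    show "\<forall>z w. ccod C z = cdom C d0 \<and> ccod C w = cdom C e0 \<and> cdom C z = cdom C w \<and>
        cmp C d0 z = cmp C e0 w \<and> cmp C d1 z = cmp C e1 w \<longrightarrow>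
        (\<exists>u. hom C u (cdom C z) (cdom C a) \<and> cmp C a u = z)"
    proof (intro allI impI)
    fix z w assume H: "ccod C z = cdom C d0 \<and> ccod C w = cdom C e0 \<and> cdom C z = cdom C w \<and>
        cmp C d0 z = cmp C e0 w \<and> cmp C d1 z = cmp C e1 w"
    have kl: "cmp C k z = cmp C l w"
    proof (rule prod_uniq[OF \<pi>(1)])
      show "hom C (cmp C k z) (cdom C z) (cdom C \<pi>0)" using H k by (simp add: hom_def)
      show "hom C (cmp C l w) (cdom C z) (cdom C \<pi>0)" using H l by (simp add: hom_def)
      show "cmp C \<pi>0 (cmp C k z) = cmp C \<pi>0 (cmp C l w)" using H k l by (simp add: hom_def assoc)
      show "cmp C \<pi>1 (cmp C k z) = cmp C \<pi>1 (cmp C l w)" using H k l d\<pi> by (simp add: hom_def assoc)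
    qed
    have "\<exists>!u. hom C u (cdom C z) (cdom C a) \<and> cmp C a u = z \<and> cmp C b u = w"
      by (rule U) (use H k l kl in \<open>auto simp: hom_def\<close>)
    then show "\<exists>u. hom C u (cdom C z) (cdom C a) \<and> cmp C a u = z" by blast
  qed
  qed
qed

lemma rel_le:
  assumes fc: "finitely_complete C" and rS: "reflexive_relation C X d0 d1 s0"
    and rT: "reflexive_relation C X e0 e1 r0" and ss: "strongly_split C d0 s0"
    and nS: "normal_to C m d0 d1" and nT: "normal_to C m e0 e1"
  shows "\<exists>\<phi>. hom C \<phi> (cdom C d0) (cdom C e0) \<and> cmp C e0 \<phi> = d0 \<and> cmp C e1 \<phi> = d1"
proof -
  have S: "cdom C d0 = cdom C d1" "ccod C d0 = X" "ccod C d1 = X" "hom C s0 X (cdom C d0)"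
     "cmp C d0 s0 = idm C X" "cmp C d1 s0 = idm C X"
    using rS unfolding reflexive_relation_def by blast+
  have T: "cdom C e0 = cdom C e1" "ccod C e0 = X" "ccod C e1 = X" "hom C r0 X (cdom C e0)"
     "cmp C e0 r0 = idm C X" "cmp C e1 r0 = idm C X"
    using rT unfolding reflexive_relation_def by blast+
  obtain p0 p1 mt where P: "is_product C p0 p1" "ccod C p0 = cdom C m" "ccod C p1 = cdom C m"
        "hom C mt (cdom C p0) (cdom C d0)"
        "cmp C d0 mt = cmp C m p0" "cmp C d1 mt = cmp C m p1"
        "is_pullback C d0 m mt p0"
    and mm: "ccod C m = ccod C d0"
    using nS unfolding normal_to_def by blast
  obtain q0 q1 nt where Q: "is_product C q0 q1" "ccod C q0 = cdom C m" "ccod C q1 = cdom C m"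
        "hom C nt (cdom C q0) (cdom C e0)"
        "cmp C e0 nt = cmp C m q0" "cmp C e1 nt = cmp C m q1"
    using nT unfolding normal_to_def by blast
  have dp: "cdom C p0 = cdom C p1" using P unfolding is_product_def by auto
  have dq: "cdom C q0 = cdom C q1" using Q unfolding is_product_def by auto
  have jee: "jointly_extremally_epic C mt s0"
    using ss[unfolded strongly_split_def, rule_format, of m mt p0] mm P(7) by simp
  obtain \<chi> where \<chi>: "hom C \<chi> (cdom C p0) (cdom C q0)" "cmp C q0 \<chi> = p0" "cmp C q1 \<chi> = p1"
    using prod_med[OF Q(1), of p0 p1] dp P Q by auto
  obtain a b where ab: "mono C a" "ccod C a = cdom C d0" "hom C b (cdom C a) (cdom C e0)"
     "cmp C d0 a = cmp C e0 b" "cmp C d1 a = cmp C e1 b"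
    and UI: "\<And>z w. ccod C z = cdom C d0 \<Longrightarrow> ccod C w = cdom C e0 \<Longrightarrow> cdom C z = cdom C w \<Longrightarrow>
        cmp C d0 z = cmp C e0 w \<Longrightarrow> cmp C d1 z = cmp C e1 w \<Longrightarrow>
        (\<exists>u. hom C u (cdom C z) (cdom C a) \<and> cmp C a u = z)"
    using intersection[OF fc rS rT] by blast
  have w0: "cmp C e0 (cmp C nt \<chi>) = cmp C d0 mt"
  proof -
    have "cmp C e0 (cmp C nt \<chi>) = cmp C (cmp C e0 nt) \<chi>" using Q(4) \<chi>(1) T by (simp add: hom_def assoc)
    also have "\<dots> = cmp C (cmp C m q0) \<chi>" using Q(5) by simp
    also have "\<dots> = cmp C m (cmp C q0 \<chi>)" using Q(2) \<chi>(1) by (simp add: hom_def assoc)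
    also have "\<dots> = cmp C d0 mt" using \<chi>(2) P(5) by simp
    finally show ?thesis .
  qed
  have w1: "cmp C e1 (cmp C nt \<chi>) = cmp C d1 mt"
  proof -
    have "cmp C e1 (cmp C nt \<chi>) = cmp C (cmp C e1 nt) \<chi>" using Q(4) \<chi>(1) T by (simp add: hom_def assoc)
    also have "\<dots> = cmp C (cmp C m q1) \<chi>" using Q(6) by simp
    also have "\<dots> = cmp C m (cmp C q1 \<chi>)" using Q(3) dq \<chi>(1) by (simp add: hom_def assoc)
    also have "\<dots> = cmp C d1 mt" using \<chi>(3) P(6) by simp
    finally show ?thesis .
  qed
  obtain u1 where u1: "hom C u1 (cdom C mt) (cdom C a)" "cmp C a u1 = mt"
    using UI[of mt "cmp C nt \<chi>"] w0 w1 P(4) Q(4) \<chi>(1) by (auto simp: hom_def)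
  obtain u2 where u2: "hom C u2 (cdom C s0) (cdom C a)" "cmp C a u2 = s0"
    using UI[of s0 r0] S T by (auto simp: hom_def)
  have "iso C a"
  proof (rule jee[unfolded jointly_extremally_epic_def, THEN conjunct2, rule_format, of a u1 u2])
    show "mono C a \<and> ccod C a = ccod C mt \<and> hom C u1 (cdom C mt) (cdom C a) \<and>
      hom C u2 (cdom C s0) (cdom C a) \<and> cmp C a u1 = mt \<and> cmp C a u2 = s0"
      using ab(1,2) u1 u2 P(4) by (simp add: hom_def)
  qed
  then obtain g where g: "hom C g (ccod C a) (cdom C a)" "cmp C g a = idm C (cdom C a)"
      "cmp C a g = idm C (ccod C a)"
    unfolding iso_def by blast
  show ?thesis
  proof (intro exI conjI)
    show "hom C (cmp C b g) (cdom C d0) (cdom C e0)" using g ab by (simp add: hom_def)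
    have "cmp C e0 (cmp C b g) = cmp C (cmp C e0 b) g" using g ab T by (simp add: hom_def assoc)
    also have "\<dots> = cmp C (cmp C d0 a) g" using ab(4) by simp
    also have "\<dots> = cmp C d0 (cmp C a g)" using g ab(2) by (simp add: hom_def assoc[symmetric])
    also have "\<dots> = d0" using g ab(2) by simp
    finally show "cmp C e0 (cmp C b g) = d0" .
    have "cmp C e1 (cmp C b g) = cmp C (cmp C e1 b) g" using g ab T by (simp add: hom_def assoc)
    also have "\<dots> = cmp C (cmp C d1 a) g" using ab(5) by simp
    also have "\<dots> = cmp C d1 (cmp C a g)" using g ab(2) S by (simp add: hom_def assoc[symmetric])
    also have "\<dots> = d1" using g ab(2) S by simp
    finally show "cmp C e1 (cmp C b g) = d1" .
  qed
qed

end

theorem proposition8p5: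
  fixes C :: "('o,'a) cat" and \<Sigma> :: "('a \<times> 'a) set"
  assumes "is_category C" and "finitely_complete C"
    and "class_of_split_epis C \<Sigma>" and "fibrational C \<Sigma>"
    and "sigma_maltsev C \<Sigma>"
  shows "(\<forall>X m d0 d1 s0. sigma_equivalence_relation C \<Sigma> X d0 d1 s0 \<and> normal_to C m d0 d1
            \<longrightarrow> sigma_special C \<Sigma> (cdom C m))
       \<and> (sigma_protomodular C \<Sigma> \<longrightarrow>
          (\<forall>X m d0 d1 s0 e0 e1 r0.
             sigma_equivalence_relation C \<Sigma> X d0 d1 s0 \<and>
             sigma_equivalence_relation C \<Sigma> X e0 e1 r0 \<and>
             normal_to C m d0 d1 \<and> normal_to C m e0 e1
             \<longrightarrow> (\<exists>\<phi>. iso C \<phi> \<and> hom C \<phi> (cdom C d0) (cdom C e0) \<and>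
                      cmp C e0 \<phi> = d0 \<and> cmp C e1 \<phi> = d1)))"
proof -
  interpret ecat C by unfold_locales (fact assms(1))
  have fc: "finitely_complete C" by (fact assms(2))
  have P1: "\<forall>X m d0 d1 s0. sigma_equivalence_relation C \<Sigma> X d0 d1 s0 \<and> normal_to C m d0 d1
            \<longrightarrow> sigma_special C \<Sigma> (cdom C m)"
  proof (intro allI impI)
    fix X m d0 d1 s0 assume H: "sigma_equivalence_relation C \<Sigma> X d0 d1 s0 \<and> normal_to C m d0 d1"
    have rS: "reflexive_relation C X d0 d1 s0" and inS: "(d0, s0) \<in> \<Sigma>"
      using H unfolding sigma_equivalence_relation_def sigma_relation_def by blast+
    have S: "cdom C d0 = cdom C d1" "ccod C d0 = X" "ccod C d1 = X" "hom C s0 X (cdom C d0)"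
       "cmp C d0 s0 = idm C X" "cmp C d1 s0 = idm C X"
      using rS unfolding reflexive_relation_def by blast+
    have Sm: "\<And>g h. ccod C g = cdom C d0 \<Longrightarrow> ccod C h = cdom C d0 \<Longrightarrow> cdom C g = cdom C h \<Longrightarrow>
        cmp C d0 g = cmp C d0 h \<Longrightarrow> cmp C d1 g = cmp C d1 h \<Longrightarrow> g = h"
      using rS unfolding reflexive_relation_def by blast
    have nS: "normal_to C m d0 d1" using H by blast
    obtain p0 p1 mt where P: "is_product C p0 p1" "ccod C p0 = cdom C m" "ccod C p1 = cdom C m"
          "hom C mt (cdom C p0) (cdom C d0)"
          "cmp C d0 mt = cmp C m p0" "cmp C d1 mt = cmp C m p1"
          "is_pullback C d0 m mt p0"
      and mm: "ccod C m = ccod C d0"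
      using nS unfolding normal_to_def by blast
    show "sigma_special C \<Sigma> (cdom C m)" unfolding sigma_special_def
    proof (intro allI impI)
      fix q0 q1 \<delta> assume Q: "is_product C q0 q1 \<and> ccod C q0 = cdom C m \<and> ccod C q1 = cdom C m \<and>
        hom C \<delta> (cdom C m) (cdom C q0) \<and> cmp C q0 \<delta> = idm C (cdom C m) \<and> cmp C q1 \<delta> = idm C (cdom C m)"
      have Qp: "is_product C q0 q1" using Q by blast
      have dq: "cdom C q0 = cdom C q1" using Qp unfolding is_product_def by blast
      have dp: "cdom C p0 = cdom C p1" using P(1) unfolding is_product_def by blast
      obtain \<psi> \<psi>' where \<psi>: "hom C \<psi> (cdom C q0) (cdom C p0)" "cmp C p0 \<psi> = q0" "cmp C p1 \<psi> = q1"
          "hom C \<psi>' (cdom C p0) (cdom C q0)" "cmp C \<psi> \<psi>' = idm C (cdom C p0)"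
          "cmp C \<psi>' \<psi> = idm C (cdom C q0)"
        using prod_iso[OF P(1) Qp] P(2,3) Q by metis
      have dmt: "cdom C mt = cdom C p0" using P(4) by (simp add: hom_def)
      have pb: "is_pullback C d0 m (cmp C mt \<psi>) q0"
        using pb_iso[OF P(7), of \<psi> "cdom C q0" \<psi>'] \<psi> dmt by simp
      have eq\<delta>: "cmp C (cmp C mt \<psi>) \<delta> = cmp C s0 m"
      proof (rule Sm)
        show "ccod C (cmp C (cmp C mt \<psi>) \<delta>) = cdom C d0" using P(4) \<psi> Q by (simp add: hom_def)
        show "ccod C (cmp C s0 m) = cdom C d0" using S mm by (simp add: hom_def)
        show "cdom C (cmp C (cmp C mt \<psi>) \<delta>) = cdom C (cmp C s0 m)"
          using P(4) \<psi> Q S mm by (simp add: hom_def)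
        have "cmp C d0 (cmp C (cmp C mt \<psi>) \<delta>) = cmp C (cmp C (cmp C d0 mt) \<psi>) \<delta>"
          using P(4) \<psi>(1) Q by (simp add: hom_def assoc)
        also have "\<dots> = cmp C (cmp C (cmp C m p0) \<psi>) \<delta>" using P(5) by simp
        also have "\<dots> = cmp C m (cmp C (cmp C p0 \<psi>) \<delta>)"
          using P(2) \<psi>(1) Q by (simp add: hom_def assoc)
        also have "\<dots> = m" using \<psi>(2) Q by simp
        also have "\<dots> = cmp C (cmp C d0 s0) m" using S mm by simp
        also have "\<dots> = cmp C d0 (cmp C s0 m)" using S mm by (simp add: hom_def assoc)
        finally show "cmp C d0 (cmp C (cmp C mt \<psi>) \<delta>) = cmp C d0 (cmp C s0 m)" .
        have "cmp C d1 (cmp C (cmp C mt \<psi>) \<delta>) = cmp C (cmp C (cmp C d1 mt) \<psi>) \<delta>"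
          using P(4) \<psi>(1) Q S by (simp add: hom_def assoc)
        also have "\<dots> = cmp C (cmp C (cmp C m p1) \<psi>) \<delta>" using P(6) by simp
        also have "\<dots> = cmp C m (cmp C (cmp C p1 \<psi>) \<delta>)"
          using P(3) dp \<psi>(1) Q by (simp add: hom_def assoc)
        also have "\<dots> = m" using \<psi>(3) Q by simp
        also have "\<dots> = cmp C (cmp C d1 s0) m" using S mm by simp
        also have "\<dots> = cmp C d1 (cmp C s0 m)" using S mm by (simp add: hom_def assoc)
        finally show "cmp C d1 (cmp C (cmp C mt \<psi>) \<delta>) = cmp C d1 (cmp C s0 m)" .
      qed
      have fib: "\<forall>f s g q p s'. (f,s) \<in> \<Sigma> \<and> ccod C g = ccod C f \<and> is_pullback C f g q p \<and>
        hom C s' (cdom C g) (cdom C p) \<and> cmp C p s' = idm C (cdom C g) \<and>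
        cmp C q s' = cmp C s g \<longrightarrow> (p, s') \<in> \<Sigma>"
        using assms(4) unfolding fibrational_def by blast
      have inQ: "(q0, \<delta>) \<in> \<Sigma>"
        using fib[rule_format, of d0 s0 m "cmp C mt \<psi>" q0 \<delta>] inS mm pb Q eq\<delta> by blast
      have rQ: "reflexive_relation C (cdom C m) q0 q1 \<delta>" unfolding reflexive_relation_def
      proof (intro conjI allI impI)
        show "cdom C q0 = cdom C q1" by (fact dq)
        show "ccod C q0 = cdom C m" "ccod C q1 = cdom C m" using Q by blast+
        show "hom C \<delta> (cdom C m) (cdom C q0)" "cmp C q0 \<delta> = idm C (cdom C m)"
          "cmp C q1 \<delta> = idm C (cdom C m)" using Q by blast+
        fix g h assume G: "ccod C g = cdom C q0 \<and> ccod C h = cdom C q0 \<and> cdom C g = cdom C h \<and>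
          cmp C q0 g = cmp C q0 h \<and> cmp C q1 g = cmp C q1 h"
        show "g = h"
          by (rule prod_uniq[OF Qp, of g "cdom C g" h]) (use G in \<open>auto simp: hom_def\<close>)
      qed
      show "sigma_relation C \<Sigma> (cdom C m) q0 q1 \<delta>"
        unfolding sigma_relation_def using rQ inQ by blast
    qed
  qed
  have P2: "sigma_protomodular C \<Sigma> \<longrightarrow>
          (\<forall>X m d0 d1 s0 e0 e1 r0.
             sigma_equivalence_relation C \<Sigma> X d0 d1 s0 \<and>
             sigma_equivalence_relation C \<Sigma> X e0 e1 r0 \<and>
             normal_to C m d0 d1 \<and> normal_to C m e0 e1
             \<longrightarrow> (\<exists>\<phi>. iso C \<phi> \<and> hom C \<phi> (cdom C d0) (cdom C e0) \<and>
                      cmp C e0 \<phi> = d0 \<and> cmp C e1 \<phi> = d1))"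
  proof (intro allI impI)
    fix X m d0 d1 s0 e0 e1 r0
    assume pm: "sigma_protomodular C \<Sigma>"
      and H: "sigma_equivalence_relation C \<Sigma> X d0 d1 s0 \<and>
             sigma_equivalence_relation C \<Sigma> X e0 e1 r0 \<and>
             normal_to C m d0 d1 \<and> normal_to C m e0 e1"
    have rS: "reflexive_relation C X d0 d1 s0" and inS: "(d0, s0) \<in> \<Sigma>"
      using H unfolding sigma_equivalence_relation_def sigma_relation_def by blast+
    have rT: "reflexive_relation C X e0 e1 r0" and inT: "(e0, r0) \<in> \<Sigma>"
      using H unfolding sigma_equivalence_relation_def sigma_relation_def by blast+
    have nS: "normal_to C m d0 d1" and nT: "normal_to C m e0 e1" using H by blast+
    have ssS: "strongly_split C d0 s0" using pm inS unfolding sigma_protomodular_def by blast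
    have ssT: "strongly_split C e0 r0" using pm inT unfolding sigma_protomodular_def by blast
    obtain \<phi> where \<phi>: "hom C \<phi> (cdom C d0) (cdom C e0)" "cmp C e0 \<phi> = d0" "cmp C e1 \<phi> = d1"
      using rel_le[OF fc rS rT ssS nS nT] by blast
    obtain \<psi> where \<psi>: "hom C \<psi> (cdom C e0) (cdom C d0)" "cmp C d0 \<psi> = e0" "cmp C d1 \<psi> = e1"
      using rel_le[OF fc rT rS ssT nT nS] by blast
    have S: "cdom C d0 = cdom C d1" "ccod C d0 = X" "ccod C d1 = X"
      using rS unfolding reflexive_relation_def by blast+
    have Sm: "\<And>g h. ccod C g = cdom C d0 \<Longrightarrow> ccod C h = cdom C d0 \<Longrightarrow> cdom C g = cdom C h \<Longrightarrow>
        cmp C d0 g = cmp C d0 h \<Longrightarrow> cmp C d1 g = cmp C d1 h \<Longrightarrow> g = h"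
      using rS unfolding reflexive_relation_def by blast
    have T: "cdom C e0 = cdom C e1" "ccod C e0 = X" "ccod C e1 = X"
      using rT unfolding reflexive_relation_def by blast+
    have Tm: "\<And>g h. ccod C g = cdom C e0 \<Longrightarrow> ccod C h = cdom C e0 \<Longrightarrow> cdom C g = cdom C h \<Longrightarrow>
        cmp C e0 g = cmp C e0 h \<Longrightarrow> cmp C e1 g = cmp C e1 h \<Longrightarrow> g = h"
      using rT unfolding reflexive_relation_def by blast
    have i1: "cmp C \<psi> \<phi> = idm C (cdom C d0)"
    proof (rule Sm)
      show "ccod C (cmp C \<psi> \<phi>) = cdom C d0" "ccod C (idm C (cdom C d0)) = cdom C d0"
        "cdom C (cmp C \<psi> \<phi>) = cdom C (idm C (cdom C d0))" using \<phi> \<psi> by (auto simp: hom_def)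
      have "cmp C d0 (cmp C \<psi> \<phi>) = cmp C (cmp C d0 \<psi>) \<phi>" using \<phi>(1) \<psi>(1) S by (simp add: hom_def assoc)
      also have "\<dots> = d0" using \<psi>(2) \<phi>(2) by simp
      finally show "cmp C d0 (cmp C \<psi> \<phi>) = cmp C d0 (idm C (cdom C d0))" by simp
      have "cmp C d1 (cmp C \<psi> \<phi>) = cmp C (cmp C d1 \<psi>) \<phi>" using \<phi>(1) \<psi>(1) S by (simp add: hom_def assoc)
      also have "\<dots> = d1" using \<psi>(3) \<phi>(3) by simp
      finally show "cmp C d1 (cmp C \<psi> \<phi>) = cmp C d1 (idm C (cdom C d0))" using S by simp
    qed
    have i2: "cmp C \<phi> \<psi> = idm C (cdom C e0)"
    proof (rule Tm)
      show "ccod C (cmp C \<phi> \<psi>) = cdom C e0" "ccod C (idm C (cdom C e0)) = cdom C e0"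
        "cdom C (cmp C \<phi> \<psi>) = cdom C (idm C (cdom C e0))" using \<phi> \<psi> by (auto simp: hom_def)
      have "cmp C e0 (cmp C \<phi> \<psi>) = cmp C (cmp C e0 \<phi>) \<psi>" using \<phi>(1) \<psi>(1) T by (simp add: hom_def assoc)
      also have "\<dots> = e0" using \<psi>(2) \<phi>(2) by simp
      finally show "cmp C e0 (cmp C \<phi> \<psi>) = cmp C e0 (idm C (cdom C e0))" by simp
      have "cmp C e1 (cmp C \<phi> \<psi>) = cmp C (cmp C e1 \<phi>) \<psi>" using \<phi>(1) \<psi>(1) T by (simp add: hom_def assoc)
      also have "\<dots> = e1" using \<psi>(3) \<phi>(3) by simp
      finally show "cmp C e1 (cmp C \<phi> \<psi>) = cmp C e1 (idm C (cdom C e0))" using T by simp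
    qed
    have "iso C \<phi>" unfolding iso_def
      using \<phi>(1) \<psi>(1) i1 i2 by (intro exI[of _ \<psi>]) (simp add: hom_def)
    then show "\<exists>\<phi>. iso C \<phi> \<and> hom C \<phi> (cdom C d0) (cdom C e0) \<and>
                      cmp C e0 \<phi> = d0 \<and> cmp C e1 \<phi> = d1" using \<phi> by blast
  qed
  show ?thesis using P1 P2 by blast
qed

end
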